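(* Let $X\sim\mathcal N(0,\Sigma)$ be an $n$-dimensional Gaussian random vector and $\rho(x)=\max\{0,x\}$ acting entrywise. Then $\mathbb E\|\rho(X)\|_2\ge\sqrt{\operatorname{tr}(\Sigma)/(2\pi)}$. *)

theory Defs
  imports "HOL-Probability.Probability"
begin

text \<open>A random vector X on the probability space M is centred Gaussian with covariance
  matrix Sigma (symmetric, positive semidefinite) iff every linear functional a \<bullet> X is
  normally distributed with mean 0 and variance a \<bullet> (S *v a); variance 0 means the
  functional vanishes almost surely (degenerate Gaussian).\<close>
definition centered_gaussian_vector ::
  "'w measure \<Rightarrow> ('w \<Rightarrow> real^'n) \<Rightarrow> real^'n^'n \<Rightarrow> bool" where
  "centered_gaussian_vector M X S \<longleftrightarrow>
     X \<in> borel_measurable M \<and>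
     transpose S = S \<and>
     (\<forall>a. 0 \<le> a \<bullet> (S *v a)) \<and>
     (\<forall>a. (if a \<bullet> (S *v a) = 0
           then (AE \<omega> in M. a \<bullet> X \<omega> = 0)
           else distributed M lborel (\<lambda>\<omega>. a \<bullet> X \<omega>)
                  (\<lambda>x. ennreal (normal_density 0 (sqrt (a \<bullet> (S *v a))) x))))"

definition relu_vec :: "real^'n \<Rightarrow> real^'n" where
  "relu_vec x = (\<chi> i. max 0 (x $ i))"

end

theory Submission
  imports Defs
begin

lemma quad_axis: "axis i 1 \<bullet> (S *v axis i (1::real)) = S $ i $ i"
proof -
  have "axis i 1 \<bullet> (S *v axis i (1::real)) = (S *v axis i (1::real)) $ i" by (simp add: inner_axis')
  also have "\<dots> = S $ i $ i"
    unfolding matrix_vector_mult_def axis_def by (simp add: mult.commute[of "S $ i $ _"] if_distrib[of "\<lambda>x. x * _"] cong: if_cong)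
  finally show ?thesis .
qed

lemma relu_cont: "continuous_on UNIV (relu_vec :: real^'n \<Rightarrow> real^'n)"
  unfolding relu_vec_def
  by (intro continuous_on_vec_lambda continuous_intros)

lemma relu_meas: "(relu_vec :: real^'n \<Rightarrow> real^'n) \<in> borel_measurable borel"
  using relu_cont by (rule borel_measurable_continuous_onI)

lemma comp_gauss:
  fixes M :: "'w measure" and X :: "'w \<Rightarrow> real^'n" and S :: "real^'n^'n"
  assumes P: "prob_space M"
    and G: "centered_gaussian_vector M X S"
  shows "integrable M (\<lambda>\<omega>. max 0 (X \<omega> $ i)) \<and>
         prob_space.expectation M (\<lambda>\<omega>. max 0 (X \<omega> $ i)) = sqrt (S $ i $ i / (2 * pi))"
proof -
  interpret prob_space M by fact
  have ax: "\<And>x::real^'n. axis i 1 \<bullet> x = x $ i" by (simp add: inner_axis')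
  have Xm: "X \<in> borel_measurable M" using G unfolding centered_gaussian_vector_def by blast
  have Xim: "(\<lambda>\<omega>. X \<omega> $ i) \<in> borel_measurable M" using measurable_comp[OF Xm borel_measurable_continuous_onI[OF continuous_on_component[OF continuous_on_id]]]
    by (simp add: comp_def)
  have H: "if S $ i $ i = 0 then (AE \<omega> in M. X \<omega> $ i = 0)
           else distributed M lborel (\<lambda>\<omega>. X \<omega> $ i)
                  (\<lambda>x. ennreal (normal_density 0 (sqrt (S $ i $ i)) x))"
  proof -
    have "\<forall>a. (if a \<bullet> (S *v a) = 0
           then (AE \<omega> in M. a \<bullet> X \<omega> = 0)
           else distributed M lborel (\<lambda>\<omega>. a \<bullet> X \<omega>)
                  (\<lambda>x. ennreal (normal_density 0 (sqrt (a \<bullet> (S *v a))) x)))"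
      using G unfolding centered_gaussian_vector_def by blast
    from spec[OF this, of "axis i 1"] show ?thesis by (simp only: ax quad_axis)
  qed
  have nn: "S $ i $ i \<ge> 0"
  proof -
    have "\<forall>a. 0 \<le> a \<bullet> (S *v a)" using G unfolding centered_gaussian_vector_def by blast
    from spec[OF this, of "axis i 1"] show ?thesis by (simp only: quad_axis)
  qed
  show ?thesis
  proof (cases "S $ i $ i = 0")
    case True
    with H have ae: "AE \<omega> in M. max 0 (X \<omega> $ i) = 0" by auto
    have "integrable M (\<lambda>\<omega>. max 0 (X \<omega> $ i))"
      using integrable_cong_AE[of "\<lambda>\<omega>. max 0 (X \<omega> $ i)" M "\<lambda>_. 0"] ae Xim by auto
    moreover have "expectation (\<lambda>\<omega>. max 0 (X \<omega> $ i)) = 0"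
      using integral_cong_AE[of "\<lambda>\<omega>. max 0 (X \<omega> $ i)" M "\<lambda>_. 0"] ae Xim by auto
    ultimately show ?thesis using True by simp
  next
    case False
    define s where "s = sqrt (S $ i $ i)"
    have s: "0 < s" using False nn by (simp add: s_def)
    have D: "distributed M lborel (\<lambda>\<omega>. X \<omega> $ i) (\<lambda>x. ennreal (normal_density 0 s x))"
      using H False by (simp add: s_def)
    have eq: "(\<lambda>x. normal_density 0 s x * max 0 x) =
       (\<lambda>x. (normal_density 0 s x * x + normal_density 0 s x * \<bar>x - 0\<bar>^(2*0+1)) / 2)"
      by (auto simp: fun_eq_iff max_def field_simps)
    have hb: "has_bochner_integral lborel (\<lambda>x. normal_density 0 s x * max 0 x)
              ((0 + 2^0 * s^(2*0+1) * fact 0 * sqrt (2/pi)) / 2)"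
      unfolding eq
      by (intro has_bochner_integral_divide_zero has_bochner_integral_add
            normal_moment_nz_1 normal_moment_abs_odd s)
    have I1: "integrable M (\<lambda>\<omega>. max 0 (X \<omega> $ i))"
      using distributed_integrable[OF D, of "\<lambda>x. max 0 x"] integrable.intros[OF hb] by auto
    have "expectation (\<lambda>\<omega>. max 0 (X \<omega> $ i)) = s * sqrt (2/pi) / 2"
      using distributed_integral[OF D, of "\<lambda>x. max 0 x"] has_bochner_integral_integral_eq[OF hb]
      by auto
    also have "\<dots> = sqrt (S $ i $ i / (2 * pi))"
    proof -
      have s4: "sqrt (4::real) = 2" by (rule real_sqrt_unique) auto
      have "sqrt (S $ i $ i * (2/pi) / 4) = s * sqrt (2/pi) / 2"
        unfolding real_sqrt_divide real_sqrt_mult s4 s_def by simp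
      then have "s * sqrt (2/pi) / 2 = sqrt (S $ i $ i * (2/pi) / 4)" by simp
      also have "S $ i $ i * (2/pi) / 4 = S $ i $ i / (2*pi)" by (simp add: field_simps)
      finally show ?thesis .
    qed
    finally show ?thesis using I1 by simp
  qed
qed

theorem mainTheorem15:
  fixes M :: "'w measure" and X :: "'w \<Rightarrow> real^'n" and S :: "real^'n^'n"
  assumes "prob_space M"
    and "centered_gaussian_vector M X S"
  shows "prob_space.expectation M (\<lambda>\<omega>. norm (relu_vec (X \<omega>))) \<ge> sqrt (trace S / (2 * pi))"
proof -
  interpret prob_space M by fact
  note C = comp_gauss[OF assms]
  have Xm: "X \<in> borel_measurable M" using assms(2) unfolding centered_gaussian_vector_def by blast
  have nn: "\<And>i. S $ i $ i \<ge> 0"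
  proof -
    fix i
    have "\<forall>a. 0 \<le> a \<bullet> (S *v a)" using assms(2) unfolding centered_gaussian_vector_def by blast
    from spec[OF this, of "axis i 1"] show "S $ i $ i \<ge> 0" by (simp only: quad_axis)
  qed
  define m where "m = (\<chi> i. sqrt (S $ i $ i / (2*pi)))"
  have Yi: "\<And>x i. relu_vec x $ i = max 0 (x $ i)" by (simp add: relu_vec_def)
  have mm: "m \<bullet> m = trace S / (2*pi)"
    using nn by (simp add: m_def inner_vec_def trace_def sum_divide_distrib)
  have nm: "norm m = sqrt (trace S / (2*pi))"
    using mm by (metis norm_eq_sqrt_inner)
  have Ym: "(\<lambda>\<omega>. relu_vec (X \<omega>)) \<in> borel_measurable M"
    using measurable_comp[OF Xm relu_meas] by (simp add: comp_def)
  have Nm: "(\<lambda>\<omega>. norm (relu_vec (X \<omega>))) \<in> borel_measurable M"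
    using Ym by measurable
  have intg: "integrable M (\<lambda>\<omega>. \<Sum>i\<in>UNIV. max 0 (X \<omega> $ i))"
    using C by (intro Bochner_Integration.integrable_sum) auto
  have intY: "integrable M (\<lambda>\<omega>. norm (relu_vec (X \<omega>)))"
  proof (rule Bochner_Integration.integrable_bound[OF intg Nm])
    show "AE \<omega> in M. norm (norm (relu_vec (X \<omega>))) \<le> norm (\<Sum>i\<in>UNIV. max 0 (X \<omega> $ i))"
    proof (intro AE_I2)
      fix \<omega>
      have "norm (relu_vec (X \<omega>)) \<le> (\<Sum>i\<in>UNIV. \<bar>relu_vec (X \<omega>) $ i\<bar>)" by (rule norm_le_l1_cart)
      also have "\<dots> = (\<Sum>i\<in>UNIV. max 0 (X \<omega> $ i))" by (simp add: Yi)
      finally show "norm (norm (relu_vec (X \<omega>))) \<le> norm (\<Sum>i\<in>UNIV. max 0 (X \<omega> $ i))"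
        by (simp add: sum_nonneg)
    qed
  qed
  show ?thesis
  proof (cases "norm m = 0")
    case True
    then show ?thesis using nm by (simp add: integral_nonneg_AE)
  next
    case False
    then have pos: "norm m > 0" by simp
    have pw: "\<And>\<omega>. (\<Sum>i\<in>UNIV. max 0 (X \<omega> $ i) * m $ i) / norm m \<le> norm (relu_vec (X \<omega>))"
    proof -
      fix \<omega>
      have "relu_vec (X \<omega>) \<bullet> m \<le> norm (relu_vec (X \<omega>)) * norm m" by (rule norm_cauchy_schwarz)
      moreover have "relu_vec (X \<omega>) \<bullet> m = (\<Sum>i\<in>UNIV. max 0 (X \<omega> $ i) * m $ i)"
        by (simp add: inner_vec_def Yi)
      ultimately show "(\<Sum>i\<in>UNIV. max 0 (X \<omega> $ i) * m $ i) / norm m \<le> norm (relu_vec (X \<omega>))"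
        using pos by (simp add: pos_divide_le_eq)
    qed
    have intL: "integrable M (\<lambda>\<omega>. (\<Sum>i\<in>UNIV. max 0 (X \<omega> $ i) * m $ i) / norm m)"
      using C by (intro integrable_divide Bochner_Integration.integrable_sum integrable_mult_left) auto
    have "expectation (\<lambda>\<omega>. (\<Sum>i\<in>UNIV. max 0 (X \<omega> $ i) * m $ i) / norm m)
          = (\<Sum>i\<in>UNIV. expectation (\<lambda>\<omega>. max 0 (X \<omega> $ i)) * m $ i) / norm m"
      using C by (simp add: integral_sum)
    also have "\<dots> = (m \<bullet> m) / norm m"
      using C by (simp add: inner_vec_def m_def)
    also have "\<dots> = norm m"
      using pos by (simp add: power2_eq_square flip: power2_norm_eq_inner)
    finally have "norm m \<le> expectation (\<lambda>\<omega>. norm (relu_vec (X \<omega>)))"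
      using integral_mono[OF intL intY pw] by simp
    then show ?thesis using nm by simp
  qed
qed

end
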